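(* Let $\{F_n\}_{n\geq 0}$ be a sequence of positive integers with $F_0=1$, and let $\Pi$ be the cobweb poset it determines. Let $\mu$ denote the M\"obius function of $\Pi$, and let $0=\langle 1,0\rangle$ be its unique minimal element. For $k\geq 0$ define the Whitney number of the first kind $w_k(\Pi)=\sum_{x\in\Pi,\ r(x)=k}\mu(0,x)$. Then $$w_0(\Pi)=1,\qquad w_k(\Pi)=F_k\cdot(-1)^k\prod_{i=1}^{k-1}(F_i-1)\quad (k>0).$$ The same formulas hold for the Whitney numbers of the first kind $w_k(P_n)=\sum_{x\in P_n,\ r(x)=k}\mu_{P_n}(0,x)$ of every finite cobweb subposet $P_n$, $n\geq 0$, for $0\leq k\leq n$.
   Context: Cobweb poset: given the sequence $\{F_n\}_{n\ge 0}$, for $s\geq 0$ let the $s$-th level be $\Phi_s=\{\langle j,s\rangle : 1\leq j\leq F_s\}$, and let $V=\bigcup_{s\geq 0}\Phi_s$. The cobweb poset is $\Pi=(V,\leq)$ where for $x=\langle s,t\rangle$, $y=\langle u,v\rangle$ one has $x\leq y$ iff ($t<v$) or ($t=v$ and $s=u$). Its rank function is $r(x)=s$ for $x\in\Phi_s$; $\langle 1,0\rangle$ is its unique minimal element. For $n\geq 0$ the finite cobweb subposet $P_n$ is $V_n=\bigcup_{0\leq s\leq n}\Phi_s$ with the order induced from $\Pi$. The empty product (for $k=1$) equals $1$. *)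

theory Defs
  imports Main
begin

definition mobius :: "'a set \<Rightarrow> ('a \<Rightarrow> 'a \<Rightarrow> bool) \<Rightarrow> 'a \<Rightarrow> 'a \<Rightarrow> int" where
  "mobius V le = (THE m.
      (\<forall>x y. (x \<notin> V \<or> y \<notin> V) \<longrightarrow> m x y = 0) \<and>
      (\<forall>x\<in>V. \<forall>y\<in>V. m x y =
         (if x = y then 1
          else if le x y then - (\<Sum>z\<in>{z\<in>V. le x z \<and> le z y \<and> z \<noteq> y}. m x z)
          else 0)))"

text \<open>Cobweb poset: element <j,s> is the pair (j,s), 1 <= j <= F s, at level s.\<close>
definition cobweb_V :: "(nat \<Rightarrow> nat) \<Rightarrow> (nat \<times> nat) set" where
  "cobweb_V F = {(j, s). 1 \<le> j \<and> j \<le> F s}"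

definition cobweb_le :: "nat \<times> nat \<Rightarrow> nat \<times> nat \<Rightarrow> bool" where
  "cobweb_le x y = (snd x < snd y \<or> (snd x = snd y \<and> fst x = fst y))"

definition cobweb_rank :: "nat \<times> nat \<Rightarrow> nat" where
  "cobweb_rank x = snd x"

definition cobweb_Vn :: "(nat \<Rightarrow> nat) \<Rightarrow> nat \<Rightarrow> (nat \<times> nat) set" where
  "cobweb_Vn F n = {x \<in> cobweb_V F. snd x \<le> n}"

definition whitney1 :: "(nat \<times> nat) set \<Rightarrow> nat \<Rightarrow> int" where
  "whitney1 V k = (\<Sum>x\<in>{x\<in>V. cobweb_rank x = k}. mobius V cobweb_le (1, 0) x)"

end

theory Submission
  imports Defs
begin

function mu :: "(nat\<times>nat) set \<Rightarrow> (nat\<times>nat) \<Rightarrow> (nat\<times>nat) \<Rightarrow> int" where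
"mu V x y = (if x \<notin> V \<or> y \<notin> V then 0 else if x = y then 1
   else if cobweb_le x y then - (\<Sum>z\<in>{z\<in>V. cobweb_le x z \<and> cobweb_le z y \<and> z \<noteq> y}. mu V x z)
   else 0)"
  by auto
termination
  by (relation "measure (\<lambda>(V,x,y). snd y)") (auto simp: cobweb_le_def prod_eq_iff)

declare mu.simps[simp del]

lemma le_less: "cobweb_le z y \<Longrightarrow> z \<noteq> y \<Longrightarrow> snd z < snd y"
  by (auto simp: cobweb_le_def prod_eq_iff)

lemma mu_spec: "(\<forall>x y. (x \<notin> V \<or> y \<notin> V) \<longrightarrow> mu V x y = 0) \<and>
      (\<forall>x\<in>V. \<forall>y\<in>V. mu V x y =
         (if x = y then 1
          else if cobweb_le x y then - (\<Sum>z\<in>{z\<in>V. cobweb_le x z \<and> cobweb_le z y \<and> z \<noteq> y}. mu V x z)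
          else 0))"
  by (auto simp: mu.simps[of V])

lemma mu_unique:
  assumes A: "(\<forall>x y. (x \<notin> V \<or> y \<notin> V) \<longrightarrow> m x y = 0) \<and>
      (\<forall>x\<in>V. \<forall>y\<in>V. m x y =
         (if x = y then 1
          else if cobweb_le x y then - (\<Sum>z\<in>{z\<in>V. cobweb_le x z \<and> cobweb_le z y \<and> z \<noteq> y}. m x z)
          else 0))"
  shows "m = mu V"
proof (intro ext)
  fix x y
  show "m x y = mu V x y"
  proof (induction "snd y" arbitrary: y rule: less_induct)
    case less
    show ?case
    proof (cases "x \<in> V \<and> y \<in> V")
      case True
      have "(\<Sum>z\<in>{z\<in>V. cobweb_le x z \<and> cobweb_le z y \<and> z \<noteq> y}. m x z)
          = (\<Sum>z\<in>{z\<in>V. cobweb_le x z \<and> cobweb_le z y \<and> z \<noteq> y}. mu V x z)"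
        by (rule sum.cong) (auto intro: less le_less)
      moreover have "m x y = (if x = y then 1
          else if cobweb_le x y then - (\<Sum>z\<in>{z\<in>V. cobweb_le x z \<and> cobweb_le z y \<and> z \<noteq> y}. m x z)
          else 0)" using True A by blast
      moreover have "mu V x y = (if x = y then 1
          else if cobweb_le x y then - (\<Sum>z\<in>{z\<in>V. cobweb_le x z \<and> cobweb_le z y \<and> z \<noteq> y}. mu V x z)
          else 0)" using True mu_spec[of V] by blast
      ultimately show ?thesis by simp
    next
      case False
      then have "m x y = 0" using A by blast
      moreover have "mu V x y = 0" using False mu_spec[of V] by blast
      ultimately show ?thesis by simp
    qed
  qed
qed

lemma mobius_eq: "mobius V cobweb_le = mu V"
  unfolding mobius_def
  by (rule the_equality) (rule mu_spec, rule mu_unique)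

definition g :: "(nat \<Rightarrow> nat) \<Rightarrow> nat \<Rightarrow> int" where
  "g F k = (-1)^k * (\<Prod>i\<in>{1..<k}. int (F i) - 1)"

lemma g_sum:
  assumes F0: "F 0 = 1" and k: "k \<ge> 1"
  shows "(\<Sum>s<k. int (F s) * g F s) = - g F k"
  using k
proof (induction k rule: nat_induct_at_least)
  case base
  then show ?case using F0 by (simp add: g_def)
next
  case (Suc k)
  have "(\<Sum>s<Suc k. int (F s) * g F s) = - g F k + int (F k) * g F k"
    using Suc by simp
  also have "\<dots> = - g F (Suc k)"
    using Suc.hyps by (simp add: g_def prod.atLeastLessThan_Suc algebra_simps)
  finally show ?case .
qed

lemma level_set:
  assumes H: "\<forall>x. snd x \<le> K \<longrightarrow> (x \<in> V \<longleftrightarrow> x \<in> cobweb_V F)" and s: "s \<le> K"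
  shows "{x\<in>V. snd x = s} = (\<lambda>j. (j,s)) ` {1..F s}"
  using H s by (auto simp: cobweb_V_def image_iff)

lemma level_sum:
  assumes H: "\<forall>x. snd x \<le> K \<longrightarrow> (x \<in> V \<longleftrightarrow> x \<in> cobweb_V F)" and s: "s \<le> K"
  shows "(\<Sum>x\<in>{x\<in>V. snd x = s}. f (snd x)) = int (F s) * f s"
proof -
  have "(\<Sum>x\<in>{x\<in>V. snd x = s}. f (snd x)) = (\<Sum>x\<in>(\<lambda>j. (j,s)) ` {1..F s}. f (snd x))"
    using level_set[OF H s] by simp
  also have "\<dots> = (\<Sum>j\<in>{1..F s}. f s)"
    by (subst sum.reindex) (auto simp: inj_on_def)
  finally show ?thesis by simp
qed

lemma below_sum:
  assumes H: "\<forall>x. snd x \<le> K \<longrightarrow> (x \<in> V \<longleftrightarrow> x \<in> cobweb_V F)" and k: "k \<le> K"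
  shows "(\<Sum>x\<in>{x\<in>V. snd x < k}. f (snd x)) = (\<Sum>s<k. int (F s) * f s)"
  using k
proof (induction k)
  case 0
  then show ?case by simp
next
  case (Suc k)
  have fin: "finite {x\<in>V. snd x = s}" if "s \<le> K" for s
    using level_set[OF H that] by simp
  have fin2: "finite {x\<in>V. snd x < k}"
  proof -
    have "{x\<in>V. snd x < k} = (\<Union>s<k. {x\<in>V. snd x = s})" by auto
    then show ?thesis using fin Suc.prems by auto
  qed
  have "{x\<in>V. snd x < Suc k} = {x\<in>V. snd x < k} \<union> {x\<in>V. snd x = k}" by auto
  then have "(\<Sum>x\<in>{x\<in>V. snd x < Suc k}. f (snd x))
     = (\<Sum>x\<in>{x\<in>V. snd x < k}. f (snd x)) + (\<Sum>x\<in>{x\<in>V. snd x = k}. f (snd x))"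
    using fin2 fin[of k] Suc.prems by (simp add: sum.union_disjoint) (subst sum.union_disjoint, auto)
  then show ?case using Suc level_sum[OF H, of k f] by simp
qed

lemma mu_val:
  assumes H: "\<forall>x. snd x \<le> K \<longrightarrow> (x \<in> V \<longleftrightarrow> x \<in> cobweb_V F)"
    and F0: "F 0 = 1"
  shows "y \<in> V \<Longrightarrow> snd y \<le> K \<Longrightarrow> mu V (1,0) y = g F (snd y)"
proof (induction "snd y" arbitrary: y rule: less_induct)
  case less
  have O: "(1,0) \<in> V" using H[rule_format, of "(1,0)"] F0 by (simp add: cobweb_V_def)
  show ?case
  proof (cases "snd y = 0")
    case True
    then have "y = (1,0)" using H less.prems F0 by (cases y) (auto simp: cobweb_V_def)
    then show ?thesis using O by (simp add: mu.simps[of V] g_def)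
  next
    case False
    then have ne: "y \<noteq> (1,0)" by auto
    have le: "cobweb_le (1,0) y" using False by (simp add: cobweb_le_def)
    have set: "{z\<in>V. cobweb_le (1,0) z \<and> cobweb_le z y \<and> z \<noteq> y} = {z\<in>V. snd z < snd y}"
    proof -
      have "z = (1,0)" if "z \<in> V" "snd z = 0" for z
        using H that F0 less.prems by (cases z) (auto simp: cobweb_V_def)
      then show ?thesis using False by (auto simp: cobweb_le_def)
    qed
    have "mu V (1,0) y = - (\<Sum>z\<in>{z\<in>V. snd z < snd y}. mu V (1,0) z)"
      using O less.prems ne le set by (simp add: mu.simps[of V _ y])
    also have "(\<Sum>z\<in>{z\<in>V. snd z < snd y}. mu V (1,0) z) = (\<Sum>z\<in>{z\<in>V. snd z < snd y}. g F (snd z))"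
      by (rule sum.cong) (use less in auto)
    also have "\<dots> = (\<Sum>s<snd y. int (F s) * g F s)"
      by (rule below_sum[OF H]) (use less in auto)
    also have "\<dots> = - g F (snd y)" using g_sum[of F "snd y", OF F0] False by simp
    finally show ?thesis by simp
  qed
qed

lemma whitney_val:
  assumes H: "\<forall>x. snd x \<le> K \<longrightarrow> (x \<in> V \<longleftrightarrow> x \<in> cobweb_V F)"
    and F0: "F 0 = 1" and k: "k \<le> K"
  shows "whitney1 V k = int (F k) * g F k"
proof -
  have "whitney1 V k = (\<Sum>x\<in>{x\<in>V. snd x = k}. g F (snd x))"
    unfolding whitney1_def mobius_eq cobweb_rank_def
    by (rule sum.cong) (use mu_val[OF H F0] k in auto)
  also have "\<dots> = int (F k) * g F k" by (rule level_sum[OF H k])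
  finally show ?thesis .
qed

theorem mainTheorem1:
  fixes F :: "nat \<Rightarrow> nat"
  assumes pos: "\<forall>n. F n > 0"
    and F0: "F 0 = 1"
  shows "whitney1 (cobweb_V F) 0 = 1
    \<and> (\<forall>k>0. whitney1 (cobweb_V F) k
              = int (F k) * (-1) ^ k * (\<Prod>i\<in>{1..<k}. int (F i) - 1))
    \<and> (\<forall>n. whitney1 (cobweb_Vn F n) 0 = 1
        \<and> (\<forall>k. 0 < k \<and> k \<le> n \<longrightarrow> whitney1 (cobweb_Vn F n) k
              = int (F k) * (-1) ^ k * (\<Prod>i\<in>{1..<k}. int (F i) - 1)))"
proof -
  have H1: "\<forall>x. snd x \<le> K \<longrightarrow> (x \<in> cobweb_V F \<longleftrightarrow> x \<in> cobweb_V F)" for K by simp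
  have H2: "\<forall>x. snd x \<le> n \<longrightarrow> (x \<in> cobweb_Vn F n \<longleftrightarrow> x \<in> cobweb_V F)" for n
    by (simp add: cobweb_Vn_def)
  show ?thesis
    using whitney_val[OF H1 F0 order_refl] whitney_val[OF H2 F0] F0
    by (auto simp: g_def mult.assoc)
qed

end
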